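(* Let $r\ge 1$ be a real parameter and let $G=(V,E)$ be a graph on $n\ge 2$ vertices with minimum degree at least $r\log n$. Then there exists $W\subseteq V$ with $|W|\ge 2$ such that every edge cut $(A,B)$ in $G[W]$ satisfies $$\Delta(A,B)\ge r\log \operatorname{imb}(A,B).$$
   Context: Graphs are simple and undirected; $\log$ is base $2$. For $W\subseteq V$, $G[W]$ is the subgraph of $G$ induced by $W$. An edge cut in $G[W]$ is a partition $(A,B)$ of $W$ into two nonempty sets. Its maximum degree is $$\Delta(A,B)=\max\Big\{\max_{a\in A}|\{\{a,b\}\in E: b\in B\}|,\ \max_{b\in B}|\{\{b,a\}\in E: a\in A\}|\Big\},$$ and its imbalance is $\operatorname{imb}(A,B)=\dfrac{|A|+|B|}{\min(|A|,|B|)}$. *)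

theory Defs
  imports Complex_Main
begin

definition simple_graph :: "'a set \<Rightarrow> 'a set set \<Rightarrow> bool" where
  "simple_graph V E \<longleftrightarrow> finite V \<and> (\<forall>e\<in>E. e \<subseteq> V \<and> card e = 2)"

definition degree :: "'a set set \<Rightarrow> 'a \<Rightarrow> nat" where
  "degree E v = card {e\<in>E. v \<in> e}"

definition deg_into :: "'a set set \<Rightarrow> 'a \<Rightarrow> 'a set \<Rightarrow> nat" where
  "deg_into E v S = card {e\<in>E. \<exists>b\<in>S. e = {v, b}}"

definition edge_cut :: "'a set \<Rightarrow> 'a set \<Rightarrow> 'a set \<Rightarrow> bool" where
  "edge_cut W A B \<longleftrightarrow> A \<noteq> {} \<and> B \<noteq> {} \<and> A \<inter> B = {} \<and> A \<union> B = W"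

definition cut_max_deg :: "'a set set \<Rightarrow> 'a set \<Rightarrow> 'a set \<Rightarrow> nat" where
  "cut_max_deg E A B = max (Max ((\<lambda>a. deg_into E a B) ` A)) (Max ((\<lambda>b. deg_into E b A) ` B))"

definition imb :: "'a set \<Rightarrow> 'a set \<Rightarrow> real" where
  "imb A B = (real (card A) + real (card B)) / real (min (card A) (card B))"

end

theory Submission
  imports Defs
begin

lemma finE: "simple_graph V E \<Longrightarrow> finite E"
  unfolding simple_graph_def
  by (meson Pow_iff finite_Pow_iff finite_subset subsetI)

lemma deg_single: "simple_graph V E \<Longrightarrow> deg_into E v {v} = 0"
proof -
  assume s: "simple_graph V E"
  have "{e\<in>E. \<exists>b\<in>{v}. e = {v, b}} = {}"
    using s unfolding simple_graph_def by force
  thus ?thesis unfolding deg_into_def by simp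
qed

lemma deg_un: assumes "simple_graph V E" "S \<inter> T = {}"
  shows "deg_into E v (S \<union> T) = deg_into E v S + deg_into E v T"
proof -
  have f: "finite E" using finE assms(1) .
  have eq: "{e\<in>E. \<exists>b\<in>S \<union> T. e = {v, b}} = {e\<in>E. \<exists>b\<in>S. e = {v, b}} \<union> {e\<in>E. \<exists>b\<in>T. e = {v, b}}"
    by blast
  have d: "{e\<in>E. \<exists>b\<in>S. e = {v, b}} \<inter> {e\<in>E. \<exists>b\<in>T. e = {v, b}} = {}"
  proof (rule ccontr)
    assume "\<not> ?thesis"
    then obtain b b' where "b \<in> S" "b' \<in> T" "{v,b} = {v,b'}" by blast
    moreover hence "b = b'" by (metis doubleton_eq_iff)
    ultimately show False using assms(2) by blast
  qed
  show ?thesis unfolding deg_into_def eq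
    by (rule card_Un_disjoint) (use f d in auto)
qed

lemma deg_V: assumes "simple_graph V E" "v \<in> V"
  shows "degree E v = deg_into E v V"
proof -
  have "{e\<in>E. v \<in> e} = {e\<in>E. \<exists>b\<in>V. e = {v, b}}"
  proof safe
    fix e assume "e \<in> E" "v \<in> e"
    then have "e \<subseteq> V" "card e = 2" using assms(1) unfolding simple_graph_def by auto
    then obtain x y where "e = {x,y}" "x \<noteq> y" by (meson card_2_iff)
    then show "\<exists>b\<in>V. e = {v, b}" using \<open>v \<in> e\<close> \<open>e \<subseteq> V\<close> by auto
  qed
  thus ?thesis unfolding degree_def deg_into_def by simp
qed

lemma main:
  assumes s: "simple_graph V E" and r: "r \<ge> 0"
  shows "W \<subseteq> V \<Longrightarrow> card W \<ge> 2 \<Longrightarrow> (\<forall>v\<in>W. real (deg_into E v W) \<ge> r * log 2 (card W)) \<Longrightarrow>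
    \<exists>W'\<subseteq>W. card W' \<ge> 2 \<and>
           (\<forall>A B. edge_cut W' A B \<longrightarrow>
              real (cut_max_deg E A B) \<ge> r * log 2 (imb A B))"
proof (induction "card W" arbitrary: W rule: less_induct)
  case less
  have finV: "finite V" using s unfolding simple_graph_def by auto
  have finW: "finite W" using less.prems(1) finV finite_subset by blast
  show ?case
  proof (cases "\<forall>A B. edge_cut W A B \<longrightarrow> real (cut_max_deg E A B) \<ge> r * log 2 (imb A B)")
    case True
    have "W \<subseteq> W \<and> card W \<ge> 2 \<and> (\<forall>A B. edge_cut W A B \<longrightarrow> real (cut_max_deg E A B) \<ge> r * log 2 (imb A B))"
      using less.prems(2) True by simp
    then show ?thesis by (rule exI)
  next
    case False
    then obtain A B where ab1: "edge_cut W A B" and ab2: "\<not> (real (cut_max_deg E A B) \<ge> r * log 2 (imb A B))"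
      by blast
    have ab: "edge_cut W A B" "real (cut_max_deg E A B) < r * log 2 (imb A B)"
      using ab1 ab2 by linarith+
    have sym1: "edge_cut W B A" using ab(1) unfolding edge_cut_def by auto
    have sym2: "cut_max_deg E B A = cut_max_deg E A B" unfolding cut_max_deg_def by simp
    have sym3: "imb B A = imb A B" unfolding imb_def by (simp add: min.commute add.commute)
    obtain S T where st: "edge_cut W S T" "real (cut_max_deg E S T) < r * log 2 (imb S T)"
      "card S \<le> card T"
    proof (cases "card A \<le> card B")
      case True show ?thesis by (rule that[OF ab True])
    next
      case False show ?thesis
      proof (rule that[of B A])
        show "edge_cut W B A" by (rule sym1)
        show "real (cut_max_deg E B A) < r * log 2 (imb B A)" using ab(2) unfolding sym2 sym3 .
        show "card B \<le> card A" using False by simp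
      qed
    qed
    have SW: "S \<subseteq> W" "T \<subseteq> W" "S \<inter> T = {}" "S \<union> T = W" "S \<noteq> {}" "T \<noteq> {}"
      using st(1) unfolding edge_cut_def by auto
    have finS: "finite S" "finite T" using SW finW finite_subset by auto
    have cS: "card S > 0" using finS SW by auto
    have cW: "card W = card S + card T" using SW finS card_Un_disjoint by metis
    have cT: "card T > 0" using finS SW by auto
    have lt: "card S < card W" using cW cT by simp
    have imbv: "imb S T = real (card W) / real (card S)"
      unfolding imb_def using st(3) cW by simp
    have logv: "log 2 (imb S T) = log 2 (card W) - log 2 (card S)"
      unfolding imbv using cS lt by (simp add: log_divide)
    have degS: "\<forall>v\<in>S. real (deg_into E v S) > r * log 2 (card S)"
    proof
      fix v assume v: "v \<in> S"
      have "deg_into E v T \<le> Max ((\<lambda>a. deg_into E a T) ` S)"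
        using v finS by auto
      also have "\<dots> \<le> cut_max_deg E S T" unfolding cut_max_deg_def by simp
      finally have dT: "real (deg_into E v T) < r * log 2 (card W) - r * log 2 (card S)"
        using st(2) logv by (simp add: right_diff_distrib)
      have "real (deg_into E v W) = real (deg_into E v S) + real (deg_into E v T)"
        using deg_un[OF s SW(3)] SW(4) by simp
      moreover have "real (deg_into E v W) \<ge> r * log 2 (card W)" using less.prems(3) v SW by auto
      ultimately show "real (deg_into E v S) > r * log 2 (card S)" using dT by linarith
    qed
    have c2: "card S \<ge> 2"
    proof (rule ccontr)
      assume "\<not> ?thesis"
      then have "card S = 1" using cS by simp
      then obtain x where "S = {x}" by (meson card_1_singletonE)
      then show False using degS deg_single[OF s, of x] by simp
    qed
    have degS': "\<forall>v\<in>S. r * log 2 (real (card S)) \<le> real (deg_into E v S)"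
    proof
      fix v assume "v \<in> S"
      then show "r * log 2 (real (card S)) \<le> real (deg_into E v S)" using degS by (simp add: less_imp_le)
    qed
    have SV: "S \<subseteq> V" using SW(1) less.prems(1) by (rule order_trans)
    obtain W' where W': "W' \<subseteq> S" "card W' \<ge> 2"
      "\<forall>A B. edge_cut W' A B \<longrightarrow> real (cut_max_deg E A B) \<ge> r * log 2 (imb A B)"
      using less.hyps[OF lt SV c2 degS'] by blast
    have "W' \<subseteq> W" using W'(1) SW(1) by (rule order_trans)
    then show ?thesis using W'(2,3) by blast
  qed
qed

theorem lemma2p2:
  fixes V :: "'a set" and E :: "'a set set" and r :: real
  assumes "simple_graph V E"
    and "r \<ge> 1"
    and "card V \<ge> 2"
    and "\<forall>v\<in>V. real (degree E v) \<ge> r * log 2 (card V)"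
  shows "\<exists>W\<subseteq>V. card W \<ge> 2 \<and>
           (\<forall>A B. edge_cut W A B \<longrightarrow>
              real (cut_max_deg E A B) \<ge> r * log 2 (imb A B))"
proof -
  have h: "\<forall>v\<in>V. real (deg_into E v V) \<ge> r * log 2 (card V)"
  proof
    fix v assume "v \<in> V"
    then show "real (deg_into E v V) \<ge> r * log 2 (card V)"
      using assms(4) deg_V[OF assms(1) \<open>v \<in> V\<close>] \<open>v \<in> V\<close> by metis
  qed
  have r0: "r \<ge> 0" using assms(2) by simp
  show ?thesis by (rule main[OF assms(1) r0 order_refl assms(3) h])
qed

end
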